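(* Let $\beta_1<\beta_2<\alpha_1<\alpha_2$ and $C_{\alpha_1},C_{\beta_2}>0$, $C_{\alpha_2},C_{\beta_1}<0$. The labeled orthotoric quadrilateral with normals $u_{\alpha_i}=C_{\alpha_i}(\alpha_i,-1)$, $u_{\beta_i}=C_{\beta_i}(\beta_i,-1)$ is a rational labeled polytope (i.e. its four normals lie in a common lattice of $\mathbb R^2$) if and only if (1) $\mathbf r=\frac{(\beta_2-\alpha_1)(\alpha_2-\beta_1)}{(\beta_2-\beta_1)(\alpha_2-\alpha_1)}\in\mathbb Q$, and (2) there exist positive rational numbers $p_{\beta_1},p_{\alpha_2},p_{\alpha_1}$ with $p_{\beta_1}C_{\beta_1}=\frac{\beta_2-\alpha_1}{\alpha_1-\beta_1}C_{\beta_2}$, $p_{\alpha_2}C_{\alpha_2}=-\frac{\beta_2-\beta_1}{\alpha_2-\beta_1}C_{\beta_2}$ and $p_{\alpha_1}C_{\alpha_1}=\frac{\beta_2-\beta_1}{\alpha_1-\beta_1}C_{\beta_2}$. In particular the underlying polytope $\sigma([\alpha_1,\alpha_2]\times[\beta_1,\beta_2])$ ($\sigma(x,y)=(x+y,xy)$) is of rational type iff $\mathbf r\in\mathbb Q$.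
   Context: A polytope is of rational type if there is a lattice containing a normal vector to each facet. *)

theory Defs
  imports "HOL-Analysis.Analysis"
begin

definition lattice2 :: "(real \<times> real) set \<Rightarrow> bool" where
  "lattice2 L \<longleftrightarrow> (\<exists>e1 e2. fst e1 * snd e2 - snd e1 * fst e2 \<noteq> 0 \<and>
      L = {of_int a *\<^sub>R e1 + of_int b *\<^sub>R e2 | a b. True})"

definition normal_to :: "(real \<times> real) \<Rightarrow> (real \<times> real) set \<Rightarrow> bool" where
  "normal_to n F \<longleftrightarrow> n \<noteq> 0 \<and> (\<forall>x\<in>F. \<forall>y\<in>F. n \<bullet> (x - y) = 0)"

definition rational_type :: "(real \<times> real) set \<Rightarrow> bool" where
  "rational_type P \<longleftrightarrow> (\<exists>L. lattice2 L \<and> (\<forall>F. F facet_of P \<longrightarrow> (\<exists>n\<in>L. normal_to n F)))"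

definition sigma_map :: "real \<times> real \<Rightarrow> real \<times> real" where
  "sigma_map z = (fst z + snd z, fst z * snd z)"

definition lnormal :: "real \<Rightarrow> real \<Rightarrow> real \<times> real" where
  "lnormal C \<gamma> = (C * \<gamma>, - C)"

end

theory Submission
  imports Defs
begin


definition D :: "real \<times> real \<Rightarrow> real \<times> real \<Rightarrow> real" where
  "D x y = fst x * snd y - snd x * fst y"

lemma D_comb: "D (of_int a *\<^sub>R e1 + of_int b *\<^sub>R e2) (of_int c *\<^sub>R e1 + of_int d *\<^sub>R e2)
   = of_int (a*d - b*c) * D e1 e2"
  by (simp add: D_def algebra_simps)

lemma lat_rat:
  assumes "lattice2 L" "u \<in> L" "v \<in> L" "w \<in> L"
  shows "D w v / D u v \<in> \<rat>"
proof -
  obtain e1 e2 where e: "fst e1 * snd e2 - snd e1 * fst e2 \<noteq> 0"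
    and L: "L = {of_int a *\<^sub>R e1 + of_int b *\<^sub>R e2 | a b. True}"
    using assms(1) unfolding lattice2_def by blast
  obtain a1 b1 where u: "u = of_int a1 *\<^sub>R e1 + of_int b1 *\<^sub>R e2" using assms(2) L by blast
  obtain a2 b2 where v: "v = of_int a2 *\<^sub>R e1 + of_int b2 *\<^sub>R e2" using assms(3) L by blast
  obtain a3 b3 where w: "w = of_int a3 *\<^sub>R e1 + of_int b3 *\<^sub>R e2" using assms(4) L by blast
  have De: "D e1 e2 \<noteq> 0" using e by (simp add: D_def)
  have "D w v / D u v = of_int (a3*b2 - b3*a2) / of_int (a1*b2 - b1*a2)"
    unfolding u v w D_comb using De by simp
  also have "\<dots> \<in> \<rat>" by (intro Rats_divide Rats_of_int)
  finally show ?thesis .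
qed

lemma Rats_den: assumes "q \<in> \<rat>" obtains m n :: int where "n > 0" "q = of_int m / of_int n"
  using assms by (auto elim: Rats_cases')

lemma lat_exists:
  assumes Duv: "D u v \<noteq> 0"
    and r: "D w1 v / D u v \<in> \<rat>" "D u w1 / D u v \<in> \<rat>" "D w2 v / D u v \<in> \<rat>" "D u w2 / D u v \<in> \<rat>"
  shows "\<exists>L. lattice2 L \<and> u \<in> L \<and> v \<in> L \<and> w1 \<in> L \<and> w2 \<in> L"
proof -
  have cr: "w = (D w v / D u v) *\<^sub>R u + (D u w / D u v) *\<^sub>R v" for w
  proof -
    have "D w v *\<^sub>R u + D u w *\<^sub>R v = D u v *\<^sub>R w"
      by (cases u, cases v, cases w) (simp add: D_def algebra_simps)
    hence "(1 / D u v) *\<^sub>R (D w v *\<^sub>R u + D u w *\<^sub>R v) = w" using Duv by simp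
    thus ?thesis by (simp add: scaleR_add_right)
  qed
  obtain m1 n1 :: int where n1: "n1 > 0" "D w1 v / D u v = of_int m1 / of_int n1" using Rats_den[OF r(1)] by blast
  obtain m2 n2 :: int where n2: "n2 > 0" "D u w1 / D u v = of_int m2 / of_int n2" using Rats_den[OF r(2)] by blast
  obtain m3 n3 :: int where n3: "n3 > 0" "D w2 v / D u v = of_int m3 / of_int n3" using Rats_den[OF r(3)] by blast
  obtain m4 n4 :: int where n4: "n4 > 0" "D u w2 / D u v = of_int m4 / of_int n4" using Rats_den[OF r(4)] by blast
  define N where "N = n1*n2*n3*n4"
  have N: "N > 0" using n1 n2 n3 n4 by (simp add: N_def)
  define e1 where "e1 = (1 / of_int N) *\<^sub>R u"
  define e2 where "e2 = (1 / of_int N) *\<^sub>R v"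
  define L where "L = {of_int a *\<^sub>R e1 + of_int b *\<^sub>R e2 | a b. True}"
  have "D e1 e2 = D u v / (of_int N)^2" unfolding e1_def e2_def D_def using N by (simp add: power2_eq_square field_simps)
  hence "D e1 e2 \<noteq> 0" using Duv N by simp
  hence lat: "lattice2 L" unfolding lattice2_def L_def D_def by blast
  have key: "x \<in> L" if H: "x = (of_int m / of_int n) *\<^sub>R u + (of_int m' / of_int n') *\<^sub>R v"
       "n dvd N" "n' dvd N" "n > 0" "n' > 0" for x m n m' n'
  proof -
    obtain k where k: "N = n*k" using H(2) by (auto elim: dvdE)
    obtain k' where k': "N = n'*k'" using H(3) by (auto elim: dvdE)
    have "x = of_int (m*k) *\<^sub>R e1 + of_int (m'*k') *\<^sub>R e2"
    proof -
      have s1: "of_int (m*k) * (1 / of_int N) = (of_int m / of_int n :: real)"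
        using H(4) k N by (cases "k = 0") (simp_all add: field_simps)
      have s2: "of_int (m'*k') * (1 / of_int N) = (of_int m' / of_int n' :: real)"
        using H(5) k' N by (cases "k' = 0") (simp_all add: field_simps)
      show ?thesis unfolding H(1) e1_def e2_def scaleR_scaleR s1 s2 ..
    qed
    thus ?thesis unfolding L_def by blast
  qed
  have "u \<in> L" by (rule key[of _ 1 1 0 1]) (simp_all add: N_def)
  moreover have "v \<in> L" by (rule key[of _ 0 1 1 1]) (simp_all add: N_def)
  moreover have "w1 \<in> L" by (rule key[of _ m1 n1 m2 n2]) (use cr[of w1] n1 n2 in \<open>simp_all add: N_def\<close>)
  moreover have "w2 \<in> L" by (rule key[of _ m3 n3 m4 n4]) (use cr[of w2] n3 n4 in \<open>simp_all add: N_def\<close>)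
  ultimately show ?thesis using lat by blast
qed



lemma D_ln: "D (lnormal c x) (lnormal d y) = c * d * (y - x)"
  by (simp add: D_def lnormal_def algebra_simps)

lemma D_swap: "D x y = - D y x" by (simp add: D_def)

lemma lat_rat2:
  assumes "lattice2 L" "u \<in> L" "v \<in> L" "w \<in> L"
  shows "D u w / D u v \<in> \<rat>"
  using lat_rat[OF assms(1,3,2,4)] by (simp add: D_swap[of w u] D_swap[of v u])

lemma r_formula:
  fixes \<alpha>1 \<alpha>2 \<beta>1 \<beta>2 C\<alpha>1 C\<alpha>2 C\<beta>1 C\<beta>2 :: real
  assumes "\<beta>1 < \<beta>2" and "\<beta>2 < \<alpha>1" and "\<alpha>1 < \<alpha>2"
    and "C\<alpha>1 \<noteq> 0" and "C\<beta>2 \<noteq> 0" and "C\<alpha>2 \<noteq> 0" and "C\<beta>1 \<noteq> 0"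
  defines "a1 \<equiv> C\<beta>1*(\<alpha>1-\<beta>1)/(C\<beta>2*(\<alpha>1-\<beta>2))"
    and "b1 \<equiv> C\<beta>1*(\<beta>1-\<beta>2)/(C\<alpha>1*(\<alpha>1-\<beta>2))"
    and "a2 \<equiv> C\<alpha>2*(\<alpha>1-\<alpha>2)/(C\<beta>2*(\<alpha>1-\<beta>2))"
    and "b2 \<equiv> C\<alpha>2*(\<alpha>2-\<beta>2)/(C\<alpha>1*(\<alpha>1-\<beta>2))"
  shows "((\<beta>2 - \<alpha>1) * (\<alpha>2 - \<beta>1)) / ((\<beta>2 - \<beta>1) * (\<alpha>2 - \<alpha>1)) = 1 - (b2*a1)/(a2*b1)"
proof -
  have "\<alpha>1-\<beta>1 \<noteq> 0" "\<alpha>1-\<beta>2 \<noteq> 0" "\<alpha>2-\<beta>2 \<noteq> 0" "\<alpha>1-\<alpha>2 \<noteq> 0" "\<beta>1-\<beta>2 \<noteq> 0"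
    "\<beta>2 - \<beta>1 \<noteq> 0" "\<alpha>2 - \<alpha>1 \<noteq> 0" using assms(1-3) by auto
  note nz = this
  define K where "K = C\<alpha>2*C\<beta>1/(C\<alpha>1*C\<beta>2*(\<alpha>1-\<beta>2)^2)"
  have K: "K \<noteq> 0" using nz assms(4-7) by (simp add: K_def)
  have e1: "b2*a1 = K * ((\<alpha>2-\<beta>2)*(\<alpha>1-\<beta>1))"
    unfolding a1_def b2_def K_def by (simp add: power2_eq_square field_simps)
  have e2: "a2*b1 = K * ((\<alpha>1-\<alpha>2)*(\<beta>1-\<beta>2))"
    unfolding a2_def b1_def K_def by (simp add: power2_eq_square field_simps)
  have q: "(b2*a1)/(a2*b1) = ((\<alpha>2-\<beta>2)*(\<alpha>1-\<beta>1)) / ((\<alpha>1-\<alpha>2)*(\<beta>1-\<beta>2))"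
    unfolding e1 e2 using K by simp
  have Y: "(\<alpha>1-\<alpha>2)*(\<beta>1-\<beta>2) = (\<beta>2 - \<beta>1) * (\<alpha>2 - \<alpha>1)" by algebra
  have Yn: "(\<beta>2 - \<beta>1) * (\<alpha>2 - \<alpha>1) \<noteq> 0" using nz by simp
  have "1 - (b2*a1)/(a2*b1) = ((\<beta>2 - \<beta>1) * (\<alpha>2 - \<alpha>1) - (\<alpha>2-\<beta>2)*(\<alpha>1-\<beta>1)) / ((\<beta>2 - \<beta>1) * (\<alpha>2 - \<alpha>1))"
    unfolding q Y using Yn by (simp add: diff_divide_distrib)
  also have "(\<beta>2 - \<beta>1) * (\<alpha>2 - \<alpha>1) - (\<alpha>2-\<beta>2)*(\<alpha>1-\<beta>1) = (\<beta>2 - \<alpha>1) * (\<alpha>2 - \<beta>1)"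
    by algebra
  finally show ?thesis by simp
qed



lemma part1:
  fixes \<alpha>1 \<alpha>2 \<beta>1 \<beta>2 C\<alpha>1 C\<alpha>2 C\<beta>1 C\<beta>2 :: real
  assumes o: "\<beta>1 < \<beta>2" "\<beta>2 < \<alpha>1" "\<alpha>1 < \<alpha>2"
    and c: "C\<alpha>1 > 0" "C\<beta>2 > 0" "C\<alpha>2 < 0" "C\<beta>1 < 0"
  defines "r \<equiv> ((\<beta>2 - \<alpha>1) * (\<alpha>2 - \<beta>1)) / ((\<beta>2 - \<beta>1) * (\<alpha>2 - \<alpha>1))"
  shows "(\<exists>L. lattice2 L \<and> lnormal C\<alpha>1 \<alpha>1 \<in> L \<and> lnormal C\<alpha>2 \<alpha>2 \<in> L
               \<and> lnormal C\<beta>1 \<beta>1 \<in> L \<and> lnormal C\<beta>2 \<beta>2 \<in> L)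
          \<longleftrightarrow>
          (r \<in> \<rat> \<and>
           (\<exists>p\<beta>1 p\<alpha>2 p\<alpha>1. p\<beta>1 \<in> \<rat> \<and> p\<alpha>2 \<in> \<rat> \<and> p\<alpha>1 \<in> \<rat> \<and>
              p\<beta>1 > 0 \<and> p\<alpha>2 > 0 \<and> p\<alpha>1 > 0 \<and>
              p\<beta>1 * C\<beta>1 = (\<beta>2 - \<alpha>1) / (\<alpha>1 - \<beta>1) * C\<beta>2 \<and>
              p\<alpha>2 * C\<alpha>2 = - ((\<beta>2 - \<beta>1) / (\<alpha>2 - \<beta>1)) * C\<beta>2 \<and>
              p\<alpha>1 * C\<alpha>1 = (\<beta>2 - \<beta>1) / (\<alpha>1 - \<beta>1) * C\<beta>2))"
proof -
  define u where "u = lnormal C\<beta>2 \<beta>2"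
  define v where "v = lnormal C\<alpha>1 \<alpha>1"
  define w1 where "w1 = lnormal C\<beta>1 \<beta>1"
  define w2 where "w2 = lnormal C\<alpha>2 \<alpha>2"
  define a1 where "a1 = C\<beta>1*(\<alpha>1-\<beta>1)/(C\<beta>2*(\<alpha>1-\<beta>2))"
  define b1 where "b1 = C\<beta>1*(\<beta>1-\<beta>2)/(C\<alpha>1*(\<alpha>1-\<beta>2))"
  define a2 where "a2 = C\<alpha>2*(\<alpha>1-\<alpha>2)/(C\<beta>2*(\<alpha>1-\<beta>2))"
  define b2 where "b2 = C\<alpha>2*(\<alpha>2-\<beta>2)/(C\<alpha>1*(\<alpha>1-\<beta>2))"
  have nz: "\<alpha>1-\<beta>1 \<noteq> 0" "\<alpha>1-\<beta>2 \<noteq> 0" "\<alpha>2-\<beta>2 \<noteq> 0" "\<alpha>1-\<alpha>2 \<noteq> 0" "\<beta>1-\<beta>2 \<noteq> 0"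
    "\<beta>2 - \<beta>1 \<noteq> 0" "\<alpha>2 - \<alpha>1 \<noteq> 0" "\<alpha>2 - \<beta>1 \<noteq> 0" "\<beta>2 - \<alpha>1 \<noteq> 0" using o by auto
  define e1 where "e1 = \<alpha>1-\<beta>1"
  define e2 where "e2 = \<alpha>1-\<beta>2"
  define e3 where "e3 = \<alpha>2-\<beta>2"
  define e4 where "e4 = \<alpha>1-\<alpha>2"
  define e5 where "e5 = \<beta>1-\<beta>2"
  define e8 where "e8 = \<alpha>2-\<beta>1"
  have ed: "\<alpha>1-\<beta>1 = e1" "\<alpha>1-\<beta>2 = e2" "\<alpha>2-\<beta>2 = e3" "\<alpha>1-\<alpha>2 = e4" "\<beta>1-\<beta>2 = e5"
    "\<alpha>2-\<beta>1 = e8" "\<beta>2-\<alpha>1 = -e2" "\<beta>2-\<beta>1 = -e5" "\<alpha>2-\<alpha>1 = -e4"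
    by (simp_all add: e1_def e2_def e3_def e4_def e5_def e8_def)
  have enz: "e1 \<noteq> 0" "e2 \<noteq> 0" "e3 \<noteq> 0" "e4 \<noteq> 0" "e5 \<noteq> 0" "e8 \<noteq> 0"
    using nz by (simp_all add: e1_def e2_def e3_def e4_def e5_def e8_def)
  have cnz: "C\<alpha>1 \<noteq> 0" "C\<beta>2 \<noteq> 0" "C\<alpha>2 \<noteq> 0" "C\<beta>1 \<noteq> 0" using c by auto
  have Duv: "D u v \<noteq> 0" unfolding u_def v_def D_ln using nz cnz by simp
  have ra1: "D w1 v / D u v = a1" unfolding u_def v_def w1_def a1_def D_ln using nz cnz by (simp add: field_simps)
  have rb1: "D u w1 / D u v = b1" unfolding u_def v_def w1_def b1_def D_ln using nz cnz by (simp add: field_simps)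
  have ra2: "D w2 v / D u v = a2" unfolding u_def v_def w2_def a2_def D_ln using nz cnz by (simp add: field_simps)
  have rb2: "D u w2 / D u v = b2" unfolding u_def v_def w2_def b2_def D_ln using nz cnz by (simp add: field_simps)
  have rf: "r = 1 - (b2*a1)/(a2*b1)" unfolding r_def a1_def b1_def a2_def b2_def
    by (rule r_formula[OF o cnz])
  have lat: "(\<exists>L. lattice2 L \<and> lnormal C\<alpha>1 \<alpha>1 \<in> L \<and> lnormal C\<alpha>2 \<alpha>2 \<in> L
               \<and> lnormal C\<beta>1 \<beta>1 \<in> L \<and> lnormal C\<beta>2 \<beta>2 \<in> L)
        \<longleftrightarrow> (a1 \<in> \<rat> \<and> b1 \<in> \<rat> \<and> a2 \<in> \<rat> \<and> b2 \<in> \<rat>)"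
  proof
    assume "\<exists>L. lattice2 L \<and> lnormal C\<alpha>1 \<alpha>1 \<in> L \<and> lnormal C\<alpha>2 \<alpha>2 \<in> L
               \<and> lnormal C\<beta>1 \<beta>1 \<in> L \<and> lnormal C\<beta>2 \<beta>2 \<in> L"
    then obtain L where L: "lattice2 L" "u \<in> L" "v \<in> L" "w1 \<in> L" "w2 \<in> L"
      unfolding u_def v_def w1_def w2_def by blast
    show "a1 \<in> \<rat> \<and> b1 \<in> \<rat> \<and> a2 \<in> \<rat> \<and> b2 \<in> \<rat>"
      using lat_rat[OF L(1,2,3,4)] lat_rat2[OF L(1,2,3,4)] lat_rat[OF L(1,2,3,5)] lat_rat2[OF L(1,2,3,5)]
      unfolding ra1 rb1 ra2 rb2 by blast
  next
    assume "a1 \<in> \<rat> \<and> b1 \<in> \<rat> \<and> a2 \<in> \<rat> \<and> b2 \<in> \<rat>"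
    then have "\<exists>L. lattice2 L \<and> u \<in> L \<and> v \<in> L \<and> w1 \<in> L \<and> w2 \<in> L"
      using lat_exists[OF Duv, of w1 w2] unfolding ra1 rb1 ra2 rb2 by blast
    thus "\<exists>L. lattice2 L \<and> lnormal C\<alpha>1 \<alpha>1 \<in> L \<and> lnormal C\<alpha>2 \<alpha>2 \<in> L
               \<and> lnormal C\<beta>1 \<beta>1 \<in> L \<and> lnormal C\<beta>2 \<beta>2 \<in> L"
      unfolding u_def v_def w1_def w2_def by blast
  qed
  have a1neg: "a1 < 0" unfolding a1_def using o c by (intro divide_neg_pos mult_neg_pos mult_pos_pos) auto
  have b1pos: "b1 > 0" unfolding b1_def using o c by (intro divide_pos_pos mult_neg_neg mult_pos_pos) auto
  have a2pos: "a2 > 0" unfolding a2_def using o c by (intro divide_pos_pos mult_neg_neg mult_pos_pos) auto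
  have rneg: "r < 0" unfolding r_def using o by (intro divide_neg_pos mult_neg_pos mult_pos_pos) auto
  show ?thesis unfolding lat
  proof
    assume Q: "a1 \<in> \<rat> \<and> b1 \<in> \<rat> \<and> a2 \<in> \<rat> \<and> b2 \<in> \<rat>"
    have rQ: "r \<in> \<rat>" unfolding rf using Q by (intro Rats_diff Rats_divide Rats_mult Rats_1) auto
    define p\<beta>1 where "p\<beta>1 = -1/a1"
    define p\<alpha>1 where "p\<alpha>1 = -b1/a1"
    define p\<alpha>2 where "p\<alpha>2 = -1/(r*a2)"
    have "p\<beta>1 \<in> \<rat>" "p\<alpha>1 \<in> \<rat>" "p\<alpha>2 \<in> \<rat>" unfolding p\<beta>1_def p\<alpha>1_def p\<alpha>2_def
      using Q rQ by (auto intro!: Rats_divide Rats_mult Rats_minus_iff[THEN iffD2] Rats_1)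
    moreover have "p\<beta>1 > 0" "p\<alpha>1 > 0" "p\<alpha>2 > 0" unfolding p\<beta>1_def p\<alpha>1_def p\<alpha>2_def
      using a1neg b1pos a2pos rneg by (auto simp: divide_pos_neg mult_neg_pos intro!: divide_neg_neg)
    moreover have "p\<beta>1 * C\<beta>1 = (\<beta>2 - \<alpha>1) / (\<alpha>1 - \<beta>1) * C\<beta>2"
      unfolding p\<beta>1_def a1_def unfolding ed using enz cnz by (simp add: field_simps)
    moreover have "p\<alpha>1 * C\<alpha>1 = (\<beta>2 - \<beta>1) / (\<alpha>1 - \<beta>1) * C\<beta>2"
      unfolding p\<alpha>1_def a1_def b1_def unfolding ed using enz cnz by (simp add: field_simps)
    moreover have "p\<alpha>2 * C\<alpha>2 = - ((\<beta>2 - \<beta>1) / (\<alpha>2 - \<beta>1)) * C\<beta>2"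
      unfolding p\<alpha>2_def a2_def r_def unfolding ed using enz cnz by (simp add: field_simps)
    ultimately show "r \<in> \<rat> \<and> (\<exists>p\<beta>1 p\<alpha>2 p\<alpha>1. p\<beta>1 \<in> \<rat> \<and> p\<alpha>2 \<in> \<rat> \<and> p\<alpha>1 \<in> \<rat> \<and>
              p\<beta>1 > 0 \<and> p\<alpha>2 > 0 \<and> p\<alpha>1 > 0 \<and>
              p\<beta>1 * C\<beta>1 = (\<beta>2 - \<alpha>1) / (\<alpha>1 - \<beta>1) * C\<beta>2 \<and>
              p\<alpha>2 * C\<alpha>2 = - ((\<beta>2 - \<beta>1) / (\<alpha>2 - \<beta>1)) * C\<beta>2 \<and>
              p\<alpha>1 * C\<alpha>1 = (\<beta>2 - \<beta>1) / (\<alpha>1 - \<beta>1) * C\<beta>2)" using rQ by blast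
  next
    assume "r \<in> \<rat> \<and> (\<exists>p\<beta>1 p\<alpha>2 p\<alpha>1. p\<beta>1 \<in> \<rat> \<and> p\<alpha>2 \<in> \<rat> \<and> p\<alpha>1 \<in> \<rat> \<and>
              p\<beta>1 > 0 \<and> p\<alpha>2 > 0 \<and> p\<alpha>1 > 0 \<and>
              p\<beta>1 * C\<beta>1 = (\<beta>2 - \<alpha>1) / (\<alpha>1 - \<beta>1) * C\<beta>2 \<and>
              p\<alpha>2 * C\<alpha>2 = - ((\<beta>2 - \<beta>1) / (\<alpha>2 - \<beta>1)) * C\<beta>2 \<and>
              p\<alpha>1 * C\<alpha>1 = (\<beta>2 - \<beta>1) / (\<alpha>1 - \<beta>1) * C\<beta>2)"
    then obtain p\<beta>1 p\<alpha>2 p\<alpha>1 where rQ: "r \<in> \<rat>" and P: "p\<beta>1 \<in> \<rat>" "p\<alpha>2 \<in> \<rat>" "p\<alpha>1 \<in> \<rat>"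
      "p\<beta>1 > 0" "p\<alpha>2 > 0" "p\<alpha>1 > 0"
      and E: "p\<beta>1 * C\<beta>1 = (\<beta>2 - \<alpha>1) / (\<alpha>1 - \<beta>1) * C\<beta>2"
              "p\<alpha>2 * C\<alpha>2 = - ((\<beta>2 - \<beta>1) / (\<alpha>2 - \<beta>1)) * C\<beta>2"
              "p\<alpha>1 * C\<alpha>1 = (\<beta>2 - \<beta>1) / (\<alpha>1 - \<beta>1) * C\<beta>2" by blast
    have E': "p\<beta>1 = (\<beta>2 - \<alpha>1) / (\<alpha>1 - \<beta>1) * C\<beta>2 / C\<beta>1"
        "p\<alpha>2 = - ((\<beta>2 - \<beta>1) / (\<alpha>2 - \<beta>1)) * C\<beta>2 / C\<alpha>2"
        "p\<alpha>1 = (\<beta>2 - \<beta>1) / (\<alpha>1 - \<beta>1) * C\<beta>2 / C\<alpha>1"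
      using E cnz enz unfolding ed by (auto simp: field_simps)
    have rnz: "r \<noteq> 0" using rneg by simp
    have "a1 = -1/p\<beta>1" unfolding E' a1_def unfolding ed using enz cnz by (simp add: field_simps)
    moreover have "b1 = p\<alpha>1/p\<beta>1" unfolding E' b1_def unfolding ed using enz cnz by (simp add: field_simps)
    moreover have "a2 = -1/(r*p\<alpha>2)" unfolding E' a2_def r_def unfolding ed using enz cnz by (simp add: field_simps)
    moreover have "b2 = -p\<alpha>1*(1-r)*a2"
    proof -
      have "b2/a2 = -p\<alpha>1*(1-r)"
      proof -
        have "1 - r = (\<alpha>2-\<beta>2)*(\<alpha>1-\<beta>1) / ((\<alpha>2-\<alpha>1)*(\<beta>2-\<beta>1))"
        proof -
          have "(\<beta>2 - \<beta>1) * (\<alpha>2 - \<alpha>1) - (\<beta>2 - \<alpha>1) * (\<alpha>2 - \<beta>1) = (\<alpha>2-\<beta>2)*(\<alpha>1-\<beta>1)" by algebra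
          moreover have "(\<beta>2 - \<beta>1) * (\<alpha>2 - \<alpha>1) \<noteq> 0" using nz by simp
          ultimately have "1 - r = ((\<alpha>2-\<beta>2)*(\<alpha>1-\<beta>1)) / ((\<beta>2 - \<beta>1) * (\<alpha>2 - \<alpha>1))"
            unfolding r_def by (metis (no_types, lifting) diff_divide_distrib divide_self)
          thus ?thesis by (simp add: mult.commute)
        qed
        thus ?thesis unfolding E' a2_def b2_def unfolding ed using enz cnz by (simp add: field_simps)
      qed
      thus ?thesis using a2pos by (simp add: field_simps)
    qed
    ultimately show "a1 \<in> \<rat> \<and> b1 \<in> \<rat> \<and> a2 \<in> \<rat> \<and> b2 \<in> \<rat>"
      using P rQ by (auto intro!: Rats_divide Rats_mult Rats_minus_iff[THEN iffD2] Rats_1 Rats_diff)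
  qed
qed



definition qf :: "real \<Rightarrow> real \<times> real \<Rightarrow> real" where
  "qf \<gamma> z = \<gamma>^2 - \<gamma> * fst z + snd z"

lemma qf_sigma: "qf \<gamma> (sigma_map (x,y)) = (\<gamma>-x)*(\<gamma>-y)"
  by (simp add: qf_def sigma_map_def power2_eq_square algebra_simps)

lemma qf_cont: "continuous_on UNIV (qf \<gamma>)"
  unfolding qf_def by (intro continuous_intros)

lemma S_eq:
  fixes \<alpha>1 \<alpha>2 \<beta>1 \<beta>2 :: real
  assumes o: "\<beta>1 < \<beta>2" "\<beta>2 < \<alpha>1" "\<alpha>1 < \<alpha>2"
  shows "sigma_map ` ({\<alpha>1..\<alpha>2} \<times> {\<beta>1..\<beta>2}) =
    {z. qf \<alpha>1 z \<le> 0 \<and> qf \<beta>2 z \<le> 0 \<and> 0 \<le> qf \<alpha>2 z \<and> 0 \<le> qf \<beta>1 z}"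
proof
  show "sigma_map ` ({\<alpha>1..\<alpha>2} \<times> {\<beta>1..\<beta>2}) \<subseteq> {z. qf \<alpha>1 z \<le> 0 \<and> qf \<beta>2 z \<le> 0 \<and> 0 \<le> qf \<alpha>2 z \<and> 0 \<le> qf \<beta>1 z}"
  proof
    fix z assume "z \<in> sigma_map ` ({\<alpha>1..\<alpha>2} \<times> {\<beta>1..\<beta>2})"
    then obtain x y where z: "z = sigma_map (x,y)" and xy: "\<alpha>1 \<le> x" "x \<le> \<alpha>2" "\<beta>1 \<le> y" "y \<le> \<beta>2" by auto
    show "z \<in> {z. qf \<alpha>1 z \<le> 0 \<and> qf \<beta>2 z \<le> 0 \<and> 0 \<le> qf \<alpha>2 z \<and> 0 \<le> qf \<beta>1 z}"
      unfolding z using o xy by (auto simp: qf_sigma mult_le_0_iff zero_le_mult_iff)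
  qed
next
  show "{z. qf \<alpha>1 z \<le> 0 \<and> qf \<beta>2 z \<le> 0 \<and> 0 \<le> qf \<alpha>2 z \<and> 0 \<le> qf \<beta>1 z} \<subseteq> sigma_map ` ({\<alpha>1..\<alpha>2} \<times> {\<beta>1..\<beta>2})"
  proof
    fix z assume "z \<in> {z. qf \<alpha>1 z \<le> 0 \<and> qf \<beta>2 z \<le> 0 \<and> 0 \<le> qf \<alpha>2 z \<and> 0 \<le> qf \<beta>1 z}"
    hence h: "qf \<alpha>1 z \<le> 0" "qf \<beta>2 z \<le> 0" "0 \<le> qf \<alpha>2 z" "0 \<le> qf \<beta>1 z" by auto
    obtain s t where zst: "z = (s,t)" by (cases z)
    define Dd where "Dd = s^2 - 4*t"
    have "qf \<beta>2 z = (\<beta>2 - s/2)^2 - Dd/4" unfolding zst qf_def Dd_def by (simp add: power2_eq_square algebra_simps) (simp add: diff_divide_distrib)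
    hence Dpos: "Dd \<ge> 0" using h(2) zero_le_power2[of "\<beta>2 - s/2"] by linarith
    define x where "x = (s + sqrt Dd)/2"
    define y where "y = (s - sqrt Dd)/2"
    have yx: "y \<le> x" unfolding x_def y_def using Dpos by simp
    have sq: "sqrt Dd * sqrt Dd = Dd" using Dpos by simp
    have xy1: "x + y = s" unfolding x_def y_def by (simp add: field_simps)
    have "x * y = (s * s - sqrt Dd * sqrt Dd)/4" unfolding x_def y_def by (simp add: field_simps)
    also have "\<dots> = (s * s - Dd)/4" using Dpos by simp
    also have "\<dots> = t" unfolding Dd_def by (simp add: power2_eq_square)
    finally have xy2: "x*y = t" .
    have zs: "z = sigma_map (x,y)" unfolding zst sigma_map_def using xy1 xy2 by simp
    have q: "qf \<gamma> z = (\<gamma>-x)*(\<gamma>-y)" for \<gamma> unfolding zs qf_sigma ..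
    have a1: "y \<le> \<alpha>1 \<and> \<alpha>1 \<le> x" using h(1) yx unfolding q by (auto simp: mult_le_0_iff)
    have b2: "y \<le> \<beta>2 \<and> \<beta>2 \<le> x" using h(2) yx unfolding q by (auto simp: mult_le_0_iff)
    have a2: "x \<le> \<alpha>2" using h(3) b2 o unfolding q by (auto simp: zero_le_mult_iff)
    have b1: "\<beta>1 \<le> y" using h(4) a1 o unfolding q by (auto simp: zero_le_mult_iff)
    show "z \<in> sigma_map ` ({\<alpha>1..\<alpha>2} \<times> {\<beta>1..\<beta>2})" unfolding zs
      using a1 b2 a2 b1 by (intro imageI) auto
  qed
qed



definition hp :: "real \<Rightarrow> real \<Rightarrow> (real \<times> real) set" where
  "hp \<gamma> e = {z. (e*\<gamma>, -e) \<bullet> z \<le> e*\<gamma>^2}"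

lemma inner_qf: "(e*\<gamma>, -e) \<bullet> z = e*\<gamma>^2 - e * qf \<gamma> z"
  by (cases z) (simp add: qf_def inner_Pair algebra_simps power2_eq_square)

lemma mem_hp: "z \<in> hp \<gamma> e \<longleftrightarrow> 0 \<le> e * qf \<gamma> z"
  unfolding hp_def inner_qf by auto

lemma hyp_eq: "e \<noteq> 0 \<Longrightarrow> {z. (e*\<gamma>, -e) \<bullet> z = e*\<gamma>^2} = {z. qf \<gamma> z = 0}"
  unfolding inner_qf by auto

lemma facets:
  fixes \<alpha>1 \<alpha>2 \<beta>1 \<beta>2 :: real
  assumes o: "\<beta>1 < \<beta>2" "\<beta>2 < \<alpha>1" "\<alpha>1 < \<alpha>2"
  shows "C facet_of (sigma_map ` ({\<alpha>1..\<alpha>2} \<times> {\<beta>1..\<beta>2})) \<longleftrightarrow>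
    (\<exists>\<gamma>\<in>{\<alpha>1,\<alpha>2,\<beta>1,\<beta>2}. C = sigma_map ` ({\<alpha>1..\<alpha>2} \<times> {\<beta>1..\<beta>2}) \<inter> {z. qf \<gamma> z = 0})"
proof -
  define S where "S = sigma_map ` ({\<alpha>1..\<alpha>2} \<times> {\<beta>1..\<beta>2})"
  define H1 where "H1 = hp \<alpha>1 (-1)"
  define H2 where "H2 = hp \<alpha>2 1"
  define H3 where "H3 = hp \<beta>1 1"
  define H4 where "H4 = hp \<beta>2 (-1)"
  define F where "F = {H1,H2,H3,H4}"
  have SF: "S = \<Inter>F" unfolding S_def S_eq[OF o] F_def H1_def H2_def H3_def H4_def
    by (auto simp: mem_hp)
  define w1 where "w1 = sigma_map ((\<beta>2+\<alpha>1)/2, \<beta>2)"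
  define w2 where "w2 = sigma_map (\<alpha>2+1, \<beta>2)"
  define w3 where "w3 = sigma_map (\<alpha>1, \<beta>1-1)"
  define w4 where "w4 = sigma_map (\<alpha>1, (\<beta>2+\<alpha>1)/2)"
  have w1: "w1 \<notin> H1" "w1 \<in> H2" "w1 \<in> H3" "w1 \<in> H4"
    unfolding w1_def H1_def H2_def H3_def H4_def mem_hp qf_sigma using o
    by (auto simp: zero_le_mult_iff mult_le_0_iff)
  have w2: "w2 \<in> H1" "w2 \<notin> H2" "w2 \<in> H3" "w2 \<in> H4"
    unfolding w2_def H1_def H2_def H3_def H4_def mem_hp qf_sigma using o
    by (auto simp: zero_le_mult_iff mult_le_0_iff)
  have w3: "w3 \<in> H1" "w3 \<in> H2" "w3 \<notin> H3" "w3 \<in> H4"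
    unfolding w3_def H1_def H2_def H3_def H4_def mem_hp qf_sigma using o
    by (auto simp: zero_le_mult_iff mult_le_0_iff)
  have w4: "w4 \<in> H1" "w4 \<in> H2" "w4 \<in> H3" "w4 \<notin> H4"
    unfolding w4_def H1_def H2_def H3_def H4_def mem_hp qf_sigma using o
    by (auto simp: zero_le_mult_iff mult_le_0_iff)
  have dist: "H1 \<noteq> H2" "H1 \<noteq> H3" "H1 \<noteq> H4" "H2 \<noteq> H3" "H2 \<noteq> H4" "H3 \<noteq> H4"
    using w1 w2 w3 by blast+
  define T where "T = {z. qf \<alpha>1 z < 0 \<and> qf \<beta>2 z < 0 \<and> 0 < qf \<alpha>2 z \<and> 0 < qf \<beta>1 z}"
  have Topen: "open T" unfolding T_def
    by (intro open_Collect_conj open_Collect_less qf_cont continuous_on_const)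
  have "sigma_map ((\<alpha>1+\<alpha>2)/2, (\<beta>1+\<beta>2)/2) \<in> T"
    unfolding T_def using o by (auto simp: qf_sigma zero_less_mult_iff mult_less_0_iff)
  hence "T \<noteq> {}" by blast
  hence affT: "affine hull T = UNIV" using Topen affine_hull_open by blast
  have "T \<subseteq> S" unfolding T_def S_def S_eq[OF o] by auto
  hence aff: "affine hull S = UNIV" using hull_mono[of T S] affT by blast
  define G where "G h = (if h = H1 then (\<alpha>1,-1) else if h = H2 then (\<alpha>2,1) else if h = H3 then (\<beta>1,1) else (\<beta>2,-1::real))" for h
  define a where "a h = (snd (G h) * fst (G h), - snd (G h))" for h
  define b where "b h = snd (G h) * (fst (G h))^2" for h
  have GH: "G H1 = (\<alpha>1,-1)" "G H2 = (\<alpha>2,1)" "G H3 = (\<beta>1,1)" "G H4 = (\<beta>2,-1)"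
    unfolding G_def using dist by auto
  have fin: "finite F" unfolding F_def by simp
  have seq: "S = affine hull S \<inter> \<Inter>F" by (subst aff) (simp add: SF)
  have faceq: "a h \<noteq> 0 \<and> h = {x. a h \<bullet> x \<le> b h}" if "h \<in> F" for h
  proof -
    have "a H1 \<noteq> 0 \<and> H1 = {x. a H1 \<bullet> x \<le> b H1}" "a H2 \<noteq> 0 \<and> H2 = {x. a H2 \<bullet> x \<le> b H2}"
      "a H3 \<noteq> 0 \<and> H3 = {x. a H3 \<bullet> x \<le> b H3}" "a H4 \<noteq> 0 \<and> H4 = {x. a H4 \<bullet> x \<le> b H4}"
      unfolding a_def b_def GH fst_conv snd_conv by (simp_all add: H1_def H2_def H3_def H4_def hp_def zero_prod_def)
    thus ?thesis using that unfolding F_def by blast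
  qed
  have psub: "S \<subset> affine hull S \<inter> \<Inter>F'" if sF: "F' \<subset> F" for F'
  proof -
    have "S \<subseteq> \<Inter>F'" using sF SF by auto
    hence sub: "S \<subseteq> affine hull S \<inter> \<Inter>F'" using aff by simp
    obtain h where h: "h \<in> F" "h \<notin> F'" using sF by blast
    have "\<exists>w. w \<in> \<Inter>F' \<and> w \<notin> S"
    proof -
      have hF': "\<And>h'. h' \<in> F' \<Longrightarrow> h' \<in> F \<and> h' \<noteq> h" using sF h by blast
      from h(1) consider "h = H1" | "h = H2" | "h = H3" | "h = H4" unfolding F_def by blast
      thus ?thesis
      proof cases
        case 1
        have "w1 \<in> \<Inter>F'"
        proof
          fix h' assume "h' \<in> F'"
          hence "h' \<in> {H2,H3,H4}" using hF' 1 unfolding F_def by auto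
          thus "w1 \<in> h'" using w1 by auto
        qed
        moreover have "w1 \<notin> S" using SF w1 unfolding F_def by auto
        ultimately show ?thesis by blast
      next
        case 2
        have "w2 \<in> \<Inter>F'"
        proof
          fix h' assume "h' \<in> F'"
          hence "h' \<in> {H1,H3,H4}" using hF' 2 unfolding F_def by auto
          thus "w2 \<in> h'" using w2 by auto
        qed
        moreover have "w2 \<notin> S" using SF w2 unfolding F_def by auto
        ultimately show ?thesis by blast
      next
        case 3
        have "w3 \<in> \<Inter>F'"
        proof
          fix h' assume "h' \<in> F'"
          hence "h' \<in> {H1,H2,H4}" using hF' 3 unfolding F_def by auto
          thus "w3 \<in> h'" using w3 by auto
        qed
        moreover have "w3 \<notin> S" using SF w3 unfolding F_def by auto
        ultimately show ?thesis by blast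
      next
        case 4
        have "w4 \<in> \<Inter>F'"
        proof
          fix h' assume "h' \<in> F'"
          hence "h' \<in> {H1,H2,H3}" using hF' 4 unfolding F_def by auto
          thus "w4 \<in> h'" using w4 by auto
        qed
        moreover have "w4 \<notin> S" using SF w4 unfolding F_def by auto
        ultimately show ?thesis by blast
      qed
    qed
    thus ?thesis using sub aff by blast
  qed
  have main: "C facet_of S \<longleftrightarrow> (\<exists>h. h \<in> F \<and> C = S \<inter> {x. a h \<bullet> x = b h})"
    by (rule facet_of_polyhedron_explicit[OF fin seq faceq psub])
  have hyps: "{x. a H1 \<bullet> x = b H1} = {z. qf \<alpha>1 z = 0}" "{x. a H2 \<bullet> x = b H2} = {z. qf \<alpha>2 z = 0}"
     "{x. a H3 \<bullet> x = b H3} = {z. qf \<beta>1 z = 0}" "{x. a H4 \<bullet> x = b H4} = {z. qf \<beta>2 z = 0}"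
    unfolding a_def b_def GH fst_conv snd_conv by (rule hyp_eq; simp)+
  have eq: "(\<exists>h. h \<in> F \<and> C = S \<inter> {x. a h \<bullet> x = b h}) \<longleftrightarrow>
     (C = S \<inter> {x. a H1 \<bullet> x = b H1} \<or> C = S \<inter> {x. a H2 \<bullet> x = b H2} \<or>
      C = S \<inter> {x. a H3 \<bullet> x = b H3} \<or> C = S \<inter> {x. a H4 \<bullet> x = b H4})"
    unfolding F_def by blast
  show ?thesis unfolding S_def[symmetric] main eq hyps by simp
qed



lemma r_rat:
  fixes \<alpha>1 \<alpha>2 \<beta>1 \<beta>2 C\<alpha>1 C\<alpha>2 C\<beta>1 C\<beta>2 :: real
  assumes o: "\<beta>1 < \<beta>2" "\<beta>2 < \<alpha>1" "\<alpha>1 < \<alpha>2"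
    and cnz: "C\<alpha>1 \<noteq> 0" "C\<beta>2 \<noteq> 0" "C\<alpha>2 \<noteq> 0" "C\<beta>1 \<noteq> 0"
    and L: "lattice2 L" "lnormal C\<alpha>1 \<alpha>1 \<in> L" "lnormal C\<alpha>2 \<alpha>2 \<in> L" "lnormal C\<beta>1 \<beta>1 \<in> L" "lnormal C\<beta>2 \<beta>2 \<in> L"
  shows "((\<beta>2 - \<alpha>1) * (\<alpha>2 - \<beta>1)) / ((\<beta>2 - \<beta>1) * (\<alpha>2 - \<alpha>1)) \<in> \<rat>"
proof -
  define u where "u = lnormal C\<beta>2 \<beta>2"
  define v where "v = lnormal C\<alpha>1 \<alpha>1"
  define w1 where "w1 = lnormal C\<beta>1 \<beta>1"
  define w2 where "w2 = lnormal C\<alpha>2 \<alpha>2"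
  define a1 where "a1 = C\<beta>1*(\<alpha>1-\<beta>1)/(C\<beta>2*(\<alpha>1-\<beta>2))"
  define b1 where "b1 = C\<beta>1*(\<beta>1-\<beta>2)/(C\<alpha>1*(\<alpha>1-\<beta>2))"
  define a2 where "a2 = C\<alpha>2*(\<alpha>1-\<alpha>2)/(C\<beta>2*(\<alpha>1-\<beta>2))"
  define b2 where "b2 = C\<alpha>2*(\<alpha>2-\<beta>2)/(C\<alpha>1*(\<alpha>1-\<beta>2))"
  have nz: "\<alpha>1-\<beta>1 \<noteq> 0" "\<alpha>1-\<beta>2 \<noteq> 0" "\<alpha>2-\<beta>2 \<noteq> 0" "\<alpha>1-\<alpha>2 \<noteq> 0" "\<beta>1-\<beta>2 \<noteq> 0"
    using o by auto
  have ra1: "D w1 v / D u v = a1" unfolding u_def v_def w1_def a1_def D_ln using nz cnz by (simp add: field_simps)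
  have rb1: "D u w1 / D u v = b1" unfolding u_def v_def w1_def b1_def D_ln using nz cnz by (simp add: field_simps)
  have ra2: "D w2 v / D u v = a2" unfolding u_def v_def w2_def a2_def D_ln using nz cnz by (simp add: field_simps)
  have rb2: "D u w2 / D u v = b2" unfolding u_def v_def w2_def b2_def D_ln using nz cnz by (simp add: field_simps)
  have L': "u \<in> L" "v \<in> L" "w1 \<in> L" "w2 \<in> L" using L unfolding u_def v_def w1_def w2_def by auto
  have Q: "a1 \<in> \<rat>" "b1 \<in> \<rat>" "a2 \<in> \<rat>" "b2 \<in> \<rat>"
    using lat_rat[OF L(1) L'(1,2,3)] lat_rat2[OF L(1) L'(1,2,3)] lat_rat[OF L(1) L'(1,2,4)] lat_rat2[OF L(1) L'(1,2,4)]
    unfolding ra1 rb1 ra2 rb2 by auto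
  have rf: "((\<beta>2 - \<alpha>1) * (\<alpha>2 - \<beta>1)) / ((\<beta>2 - \<beta>1) * (\<alpha>2 - \<alpha>1)) = 1 - (b2*a1)/(a2*b1)"
    unfolding a1_def b1_def a2_def b2_def by (rule r_formula[OF o cnz])
  have "1 - (b2*a1)/(a2*b1) \<in> \<rat>" using Q by (metis Rats_diff Rats_1 Rats_divide Rats_mult)
  thus ?thesis unfolding rf .
qed

lemma normal_edge_if:
  assumes "c \<noteq> 0"
  shows "normal_to (lnormal c \<gamma>) (S \<inter> {z. qf \<gamma> z = 0})"
proof -
  have "lnormal c \<gamma> = (c*\<gamma>, -c)" by (simp add: lnormal_def)
  moreover have "(c*\<gamma>, -c) \<noteq> 0" using assms by (simp add: zero_prod_def)
  moreover have "(c*\<gamma>, -c) \<bullet> (x - y) = 0" if "qf \<gamma> x = 0" "qf \<gamma> y = 0" for x y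
    using that by (simp add: inner_diff_right inner_qf)
  ultimately show ?thesis unfolding normal_to_def by auto
qed

lemma normal_edge_only:
  assumes "normal_to n E" "p \<in> E" "q \<in> E" "p - q = k *\<^sub>R (1, \<gamma>)" "k \<noteq> 0"
  shows "\<exists>c. c \<noteq> 0 \<and> n = lnormal c \<gamma>"
proof -
  have "n \<bullet> (p - q) = 0" using assms(1-3) unfolding normal_to_def by blast
  hence "k * (fst n + snd n * \<gamma>) = 0" unfolding assms(4) by (cases n) (simp add: inner_Pair algebra_simps)
  hence e: "fst n = - snd n * \<gamma>" using assms(5) by simp
  have "n \<noteq> 0" using assms(1) unfolding normal_to_def by blast
  hence "snd n \<noteq> 0" using e by (cases n) (auto simp: zero_prod_def)
  moreover have "n = lnormal (- snd n) \<gamma>" using e by (cases n) (simp add: lnormal_def)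
  ultimately show ?thesis by (intro exI[of _ "- snd n"]) simp
qed

lemma part2:
  fixes \<alpha>1 \<alpha>2 \<beta>1 \<beta>2 :: real
  assumes o: "\<beta>1 < \<beta>2" "\<beta>2 < \<alpha>1" "\<alpha>1 < \<alpha>2"
  shows "rational_type (sigma_map ` ({\<alpha>1..\<alpha>2} \<times> {\<beta>1..\<beta>2})) \<longleftrightarrow>
     ((\<beta>2 - \<alpha>1) * (\<alpha>2 - \<beta>1)) / ((\<beta>2 - \<beta>1) * (\<alpha>2 - \<alpha>1)) \<in> \<rat>"
proof -
  define S where "S = sigma_map ` ({\<alpha>1..\<alpha>2} \<times> {\<beta>1..\<beta>2})"
  note fac = facets[OF o, folded S_def]
  define r where "r = ((\<beta>2 - \<alpha>1) * (\<alpha>2 - \<beta>1)) / ((\<beta>2 - \<beta>1) * (\<alpha>2 - \<alpha>1))"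
  show ?thesis unfolding S_def[symmetric] r_def[symmetric]
  proof
    assume "rational_type S"
    then obtain L where L: "lattice2 L" and N: "\<And>F. F facet_of S \<Longrightarrow> \<exists>n\<in>L. normal_to n F"
      unfolding rational_type_def by blast
    have get: "\<exists>c. c \<noteq> 0 \<and> lnormal c \<gamma> \<in> L"
      if g: "\<gamma> \<in> {\<alpha>1,\<alpha>2,\<beta>1,\<beta>2}" and pq: "p \<in> S" "q \<in> S" "qf \<gamma> p = 0" "qf \<gamma> q = 0"
         "p - q = k *\<^sub>R (1, \<gamma>)" "k \<noteq> 0" for \<gamma> p q k
    proof -
      have "(S \<inter> {z. qf \<gamma> z = 0}) facet_of S" using fac g by blast
      then obtain n where n: "n \<in> L" "normal_to n (S \<inter> {z. qf \<gamma> z = 0})" using N by blast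
      obtain c where "c \<noteq> 0" "n = lnormal c \<gamma>"
        using normal_edge_only[OF n(2), of p q k \<gamma>] pq by auto
      thus ?thesis using n by blast
    qed
    have inS: "sigma_map (x,y) \<in> S" if "\<alpha>1 \<le> x" "x \<le> \<alpha>2" "\<beta>1 \<le> y" "y \<le> \<beta>2" for x y
      unfolding S_def using that by (intro imageI) auto
    have dA: "sigma_map (x,\<beta>1) - sigma_map (x,\<beta>2) = (\<beta>1-\<beta>2) *\<^sub>R (1, x)" for x
      by (simp add: sigma_map_def algebra_simps)
    have dB: "sigma_map (\<alpha>1,y) - sigma_map (\<alpha>2,y) = (\<alpha>1-\<alpha>2) *\<^sub>R (1, y)" for y
      by (simp add: sigma_map_def algebra_simps)
    obtain c1 where c1: "c1 \<noteq> 0" "lnormal c1 \<alpha>1 \<in> L"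
      using get[of \<alpha>1 "sigma_map (\<alpha>1,\<beta>1)" "sigma_map (\<alpha>1,\<beta>2)" "\<beta>1-\<beta>2"] inS o dA
      by (auto simp: qf_sigma)
    obtain c2 where c2: "c2 \<noteq> 0" "lnormal c2 \<alpha>2 \<in> L"
      using get[of \<alpha>2 "sigma_map (\<alpha>2,\<beta>1)" "sigma_map (\<alpha>2,\<beta>2)" "\<beta>1-\<beta>2"] inS o dA
      by (auto simp: qf_sigma)
    obtain c3 where c3: "c3 \<noteq> 0" "lnormal c3 \<beta>1 \<in> L"
      using get[of \<beta>1 "sigma_map (\<alpha>1,\<beta>1)" "sigma_map (\<alpha>2,\<beta>1)" "\<alpha>1-\<alpha>2"] inS o dB
      by (auto simp: qf_sigma)
    obtain c4 where c4: "c4 \<noteq> 0" "lnormal c4 \<beta>2 \<in> L"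
      using get[of \<beta>2 "sigma_map (\<alpha>1,\<beta>2)" "sigma_map (\<alpha>2,\<beta>2)" "\<alpha>1-\<alpha>2"] inS o dB
      by (auto simp: qf_sigma)
    show "r \<in> \<rat>" unfolding r_def
      by (rule r_rat[OF o c1(1) c4(1) c2(1) c3(1) L c1(2) c2(2) c3(2) c4(2)])
  next
    assume rQ: "r \<in> \<rat>"
    define C\<alpha>1 where "C\<alpha>1 = (\<beta>2-\<beta>1)/(\<alpha>1-\<beta>1)"
    define C\<beta>1 where "C\<beta>1 = (\<beta>2-\<alpha>1)/(\<alpha>1-\<beta>1)"
    define C\<alpha>2 where "C\<alpha>2 = - ((\<beta>2-\<beta>1)/(\<alpha>2-\<beta>1))"
    have s: "C\<alpha>1 > 0" "(1::real) > 0" "C\<alpha>2 < 0" "C\<beta>1 < 0"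
      unfolding C\<alpha>1_def C\<beta>1_def C\<alpha>2_def using o by (auto intro: divide_pos_pos divide_neg_pos)
    have "\<exists>L. lattice2 L \<and> lnormal C\<alpha>1 \<alpha>1 \<in> L \<and> lnormal C\<alpha>2 \<alpha>2 \<in> L
               \<and> lnormal C\<beta>1 \<beta>1 \<in> L \<and> lnormal 1 \<beta>2 \<in> L"
      unfolding part1[OF o s]
      apply (rule conjI)
       apply (fact rQ[unfolded r_def])
      apply (rule exI[of _ 1], rule exI[of _ 1], rule exI[of _ 1])
      by (simp add: C\<alpha>1_def C\<beta>1_def C\<alpha>2_def)
    then obtain L where L: "lattice2 L" "lnormal C\<alpha>1 \<alpha>1 \<in> L" "lnormal C\<alpha>2 \<alpha>2 \<in> L"
               "lnormal C\<beta>1 \<beta>1 \<in> L" "lnormal 1 \<beta>2 \<in> L" by blast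
    show "rational_type S" unfolding rational_type_def
    proof (intro exI[of _ L] conjI allI impI)
      show "lattice2 L" by fact
      fix F assume "F facet_of S"
      then obtain \<gamma> where g: "\<gamma> \<in> {\<alpha>1,\<alpha>2,\<beta>1,\<beta>2}" and F: "F = S \<inter> {z. qf \<gamma> z = 0}" using fac by blast
      have ne: "C\<alpha>1 \<noteq> 0" "C\<alpha>2 \<noteq> 0" "C\<beta>1 \<noteq> 0" "(1::real) \<noteq> 0" using s by auto
      from g consider "\<gamma> = \<alpha>1" | "\<gamma> = \<alpha>2" | "\<gamma> = \<beta>1" | "\<gamma> = \<beta>2" by blast
      thus "\<exists>n\<in>L. normal_to n F"
      proof cases
        case 1 show ?thesis unfolding F 1 using normal_edge_if[OF ne(1), of \<alpha>1 S] L(2) by blast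
      next
        case 2 show ?thesis unfolding F 2 using normal_edge_if[OF ne(2), of \<alpha>2 S] L(3) by blast
      next
        case 3 show ?thesis unfolding F 3 using normal_edge_if[OF ne(3), of \<beta>1 S] L(4) by blast
      next
        case 4 show ?thesis unfolding F 4 using normal_edge_if[OF ne(4), of \<beta>2 S] L(5) by blast
      qed
    qed
  qed
qed


theorem mainTheorem14:
  fixes \<alpha>1 \<alpha>2 \<beta>1 \<beta>2 C\<alpha>1 C\<alpha>2 C\<beta>1 C\<beta>2 :: real
  assumes "\<beta>1 < \<beta>2" and "\<beta>2 < \<alpha>1" and "\<alpha>1 < \<alpha>2"
    and "C\<alpha>1 > 0" and "C\<beta>2 > 0" and "C\<alpha>2 < 0" and "C\<beta>1 < 0"
  defines "r \<equiv> ((\<beta>2 - \<alpha>1) * (\<alpha>2 - \<beta>1)) / ((\<beta>2 - \<beta>1) * (\<alpha>2 - \<alpha>1))"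
  shows "((\<exists>L. lattice2 L \<and> lnormal C\<alpha>1 \<alpha>1 \<in> L \<and> lnormal C\<alpha>2 \<alpha>2 \<in> L
               \<and> lnormal C\<beta>1 \<beta>1 \<in> L \<and> lnormal C\<beta>2 \<beta>2 \<in> L)
          \<longleftrightarrow>
          (r \<in> \<rat> \<and>
           (\<exists>p\<beta>1 p\<alpha>2 p\<alpha>1. p\<beta>1 \<in> \<rat> \<and> p\<alpha>2 \<in> \<rat> \<and> p\<alpha>1 \<in> \<rat> \<and>
              p\<beta>1 > 0 \<and> p\<alpha>2 > 0 \<and> p\<alpha>1 > 0 \<and>
              p\<beta>1 * C\<beta>1 = (\<beta>2 - \<alpha>1) / (\<alpha>1 - \<beta>1) * C\<beta>2 \<and>
              p\<alpha>2 * C\<alpha>2 = - ((\<beta>2 - \<beta>1) / (\<alpha>2 - \<beta>1)) * C\<beta>2 \<and>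
              p\<alpha>1 * C\<alpha>1 = (\<beta>2 - \<beta>1) / (\<alpha>1 - \<beta>1) * C\<beta>2)))
        \<and> (rational_type (sigma_map ` ({\<alpha>1..\<alpha>2} \<times> {\<beta>1..\<beta>2})) \<longleftrightarrow> r \<in> \<rat>)"
proof -
  show ?thesis unfolding r_def
    using part1[OF assms(1-7)] part2[OF assms(1-3)] by (intro conjI)
qed

end
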